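(* Let $\mathcal A$ be an $n$-DPDA whose input alphabet contains the letter $\star$. Let $R$ be a (finite) run of $\mathcal A$ such that both $R(0)$ and $R(|R|)$ are milestone configurations and $R$ reads only stars (a word in $\star^*$). Then $R$ is $0$-upper.
   Context: Stacks: fix order $n\ge1$, finite stack alphabet $\Gamma$. A $0$-stack is $(\gamma,x)$ with $\gamma\in\Gamma$, $x=(x_n,\dots,x_1)$ a vector of $n$ positive integers (position). For $k\in\{1,\dots,n\}$ a $k$-stack is a finite list $[s_1,\dots,s_m]$ ($m\ge0$) of nonempty $(k-1)$-stacks such that for some $x_n,\dots,x_{k+1}$, every position in $s_i$ has the form $(x_n,\dots,x_{k+1},i,y_{k-1},\dots,y_1)$. The top is at the right; $s^k:s^{k-1}$ appends at the top (right-associative); for $s^r=t^r:t^{r-1}:\dots:t^k$, $\mathrm{top}^k(s^r)=t^k$. Equality of stacks includes positions. For $k<n$, $\mathsf p_{+1}(s^k)$ adds $1$ to the $(n-k)$-th coordinate of all positions. Operations of order $k\ge1$: $\mathsf{pop}^k(s^r:\dots:s^k:s^{k-1})=s^r:\dots:s^k$, defined only if the topmost $k$-stack has at least two $(k-1)$-stacks; $\mathsf{push}^k_\gamma(s^r:\dots:s^0)=s^r:\dots:s^{k+1}:(s^k:\dots:s^0):\mathsf p_{+1}(s^{k-1}:\dots:s^1:(\gamma,x))$ where $s^0=(\gamma',x)$. An $n$-DPDA has transitions determined by state and topmost stack symbol, each either $\mathrm{read}(\vec q)$ ($\vec q:A\to Q$ injective; leads to $(\vec q(a),s)$ for $a\in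 A$, this step reads $a$) or $(q,op)$ with $op$ a stack operation of order $\le n$ (leads to $(q,op(s))$ if defined; reads nothing). Configurations are (state, nonempty $n$-stack). A run is a finite (or, for infinite runs, infinite) sequence $R=c_0,c_1,\dots$ with each $c_i$ a successor of $c_{i-1}$; $R(i)=c_i$, $|R|$ the length, $R[i,j]=c_i,\dots,c_j$. The word read is the concatenation of letters read by the steps. History: for a run $R$ and a $0$-stack $s^0$ of $R(|R|)$, $\mathrm{hist}(R,s^0)$ is a $0$-stack of $R(0)$: if $|R|=0$ it is $s^0$; if $R=S\circ T$, $|T|=1$, and the last step is a read or a $\mathsf{pop}$, or a $\mathsf{push}^r_\gamma$ with $s^0$ not in the topmost $(r-1)$-stack of $R(|R|)$, it is $\mathrm{hist}(S,s^0)$; if the last step is $\mathsf{push}^r_\gamma$ and $s^0$ is in the topmost $(r-1)$-stack of $R(|R|)$, it is $\mathrm{hist}(S,t^0)$ with $t^0$ equal to $s^0$ with the $(n-r+1)$-th position coordinate decreased by $1$. For a $k$-stack $s^k$ of $R(|R|)$, $k\ge1$, $\mathrm{hist}(R,s^k)$ is the $k$-stack of $R(0)$ containing $\mathrm{hist}(R,s^0)$ for all $0$-stacks $s^0$ of $s^k$. For $k\in\{0,\dots,n\}$, $R$ is $k$-upper if $\mathrm{hist}(R,\mathrm{top}^k(R(|R|)))=\mathrm{top}^k(R(0))$. Milestone: a configuration $c$ is a milestone if there exist an infinite run $R$ from $c$ reading only stars and an infinite set $I\subseteq\mathbb N$ with $0\in I$ such that $R[i,j]$ is $0$-upper for all $i,j\in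 I$ with $i\le j$. *)

theory Defs
  imports Main
begin

text \<open>A 0-stack (gamma, x) is Z gamma x, where x = [x_n, ..., x_1] is the position
 (list of length n; list index j (0-based) holds coordinate x_(n-j)).
 A k-stack (k >= 1) is L [s_1, ..., s_m], the top being at the right.\<close>

datatype 'g stk = Z 'g "nat list" | L "'g stk list"

primrec zs :: "'g stk \<Rightarrow> ('g \<times> nat list) set" and zsl :: "'g stk list \<Rightarrow> ('g \<times> nat list) set" where
  "zs (Z g x) = {(g, x)}"
| "zs (L ss) = zsl ss"
| "zsl [] = {}"
| "zsl (s # ss) = zs s \<union> zsl ss"

fun kids :: "'g stk \<Rightarrow> 'g stk list" where
  "kids (Z _ _) = []"
| "kids (L ss) = ss"

fun nonempty :: "'g stk \<Rightarrow> bool" where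
  "nonempty (Z _ _) = True"
| "nonempty (L ss) = (ss \<noteq> [])"

fun stack_of :: "nat \<Rightarrow> 'g set \<Rightarrow> nat \<Rightarrow> 'g stk \<Rightarrow> bool" where
  "stack_of n G 0 (Z g x) = (g \<in> G \<and> length x = n \<and> (\<forall>c\<in>set x. 0 < c))"
| "stack_of n G 0 (L _) = False"
| "stack_of n G (Suc k) (Z _ _) = False"
| "stack_of n G (Suc k) (L ss) =
     ((\<forall>s\<in>set ss. stack_of n G k s \<and> nonempty s) \<and>
      (\<exists>pre. \<forall>i<length ss. \<forall>z\<in>zs (ss ! i).
          take (n - Suc k) (snd z) = pre \<and> snd z ! (n - Suc k) = Suc i))"

text \<open>topd d s: the topmost substack at depth d; for an n-stack s, top^k(s) = topd (n-k) s.\<close>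
fun topd :: "nat \<Rightarrow> 'g stk \<Rightarrow> 'g stk" where
  "topd 0 s = s"
| "topd (Suc d) (L ss) = topd d (last ss)"
| "topd (Suc d) (Z g x) = Z g x"

fun zof :: "'g stk \<Rightarrow> 'g \<times> nat list" where
  "zof (Z g x) = (g, x)"
| "zof (L _) = undefined"

definition top0 :: "nat \<Rightarrow> 'g stk \<Rightarrow> 'g \<times> nat list" where
  "top0 n s = zof (topd n s)"

definition topsym :: "nat \<Rightarrow> 'g stk \<Rightarrow> 'g" where
  "topsym n s = fst (top0 n s)"

fun modtop :: "nat \<Rightarrow> ('g stk list \<Rightarrow> 'g stk list) \<Rightarrow> 'g stk \<Rightarrow> 'g stk" where
  "modtop 0 f (L ss) = L (f ss)"
| "modtop 0 f (Z g x) = Z g x"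
| "modtop (Suc d) f (L ss) = L (butlast ss @ [modtop d f (last ss)])"
| "modtop (Suc d) f (Z g x) = Z g x"

fun modz :: "nat \<Rightarrow> 'g \<Rightarrow> 'g stk \<Rightarrow> 'g stk" where
  "modz 0 \<gamma> (Z g x) = Z \<gamma> x"
| "modz 0 \<gamma> (L ss) = L ss"
| "modz (Suc d) \<gamma> (L ss) = L (butlast ss @ [modz d \<gamma> (last ss)])"
| "modz (Suc d) \<gamma> (Z g x) = Z g x"

text \<open>For a k-stack
 (k<n), p_{+1} adds 1 to the (n-k)-th coordinate in the listing (x_n,...,x_1),
 i.e. to list index n-k-1 (coordinate x_(k+1)).\<close>
primrec pinc :: "nat \<Rightarrow> 'g stk \<Rightarrow> 'g stk" where
  "pinc j (Z g x) = Z g (x[j := Suc (x ! j)])"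
| "pinc j (L ss) = L (map (pinc j) ss)"

datatype 'g sop = Pop nat | Push nat 'g

text \<open>Stack operations on n-stacks. pop^k needs the topmost k-stack to have at least two
 elements. push^k_gamma appends to the topmost k-stack a copy of its topmost (k-1)-stack
 with top symbol replaced by gamma and p_{+1} applied (list index n-k = coordinate x_k).\<close>
fun apply_op :: "nat \<Rightarrow> 'g sop \<Rightarrow> 'g stk \<Rightarrow> 'g stk option" where
  "apply_op n (Pop k) s =
     (if 2 \<le> length (kids (topd (n - k) s)) then Some (modtop (n - k) butlast s) else None)"
| "apply_op n (Push k \<gamma>) s =
     Some (modtop (n - k) (\<lambda>ss. ss @ [pinc (n - k) (modz (k - 1) \<gamma> (last ss))]) s)"

datatype ('q, 'a, 'g) tr = Read "'a \<Rightarrow> 'q" | Op 'q "'g sop"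

definition op_ok :: "nat \<Rightarrow> 'g set \<Rightarrow> 'g sop \<Rightarrow> bool" where
  "op_ok n G op = (case op of Pop k \<Rightarrow> 1 \<le> k \<and> k \<le> n
                             | Push k \<gamma> \<Rightarrow> 1 \<le> k \<and> k \<le> n \<and> \<gamma> \<in> G)"

definition dpda :: "nat \<Rightarrow> 'q set \<Rightarrow> 'g set \<Rightarrow> 'a set \<Rightarrow> ('q \<Rightarrow> 'g \<Rightarrow> ('q, 'a, 'g) tr) \<Rightarrow> bool" where
  "dpda n Q G A \<delta> \<longleftrightarrow> 1 \<le> n \<and> finite Q \<and> finite G \<and> finite A \<and>
     (\<forall>q\<in>Q. \<forall>\<gamma>\<in>G. case \<delta> q \<gamma> of
          Read f \<Rightarrow> inj_on f A \<and> f ` A \<subseteq> Q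
        | Op q' op \<Rightarrow> q' \<in> Q \<and> op_ok n G op)"

type_synonym ('q, 'g) conf = "'q \<times> 'g stk"

definition valid_conf :: "nat \<Rightarrow> 'q set \<Rightarrow> 'g set \<Rightarrow> ('q, 'g) conf \<Rightarrow> bool" where
  "valid_conf n Q G c \<longleftrightarrow> fst c \<in> Q \<and> stack_of n G n (snd c) \<and> nonempty (snd c)"

text \<open>step n A delta c l c': c' is a successor of c, the step reading l (None = nothing).\<close>
definition step :: "nat \<Rightarrow> 'a set \<Rightarrow> ('q \<Rightarrow> 'g \<Rightarrow> ('q, 'a, 'g) tr) \<Rightarrow>
    ('q, 'g) conf \<Rightarrow> 'a option \<Rightarrow> ('q, 'g) conf \<Rightarrow> bool" where
  "step n A \<delta> c l c' \<longleftrightarrow>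
     (case \<delta> (fst c) (topsym n (snd c)) of
        Read f \<Rightarrow> (\<exists>a\<in>A. l = Some a \<and> c' = (f a, snd c))
      | Op q' op \<Rightarrow> l = None \<and> apply_op n op (snd c) = Some (snd c') \<and> fst c' = q')"

definition star_step :: "nat \<Rightarrow> 'a set \<Rightarrow> ('q \<Rightarrow> 'g \<Rightarrow> ('q, 'a, 'g) tr) \<Rightarrow> 'a \<Rightarrow>
    ('q, 'g) conf \<Rightarrow> ('q, 'g) conf \<Rightarrow> bool" where
  "star_step n A \<delta> star c c' \<longleftrightarrow> step n A \<delta> c None c' \<or> step n A \<delta> c (Some star) c'"

definition hist_step :: "nat \<Rightarrow> ('q \<Rightarrow> 'g \<Rightarrow> ('q, 'a, 'g) tr) \<Rightarrow>
    ('q, 'g) conf \<Rightarrow> ('q, 'g) conf \<Rightarrow> nat list \<Rightarrow> nat list" where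
  "hist_step n \<delta> c c' p =
     (case \<delta> (fst c) (topsym n (snd c)) of
        Read _ \<Rightarrow> p
      | Op _ op \<Rightarrow> (case op of
          Pop _ \<Rightarrow> p
        | Push r _ \<Rightarrow> (if p \<in> snd ` zs (topd (n - (r - 1)) (snd c'))
                       then p[n - r := p ! (n - r) - 1] else p)))"

text \<open>histd n delta R i d p: the position in R(i) that is the history of position p of R(i+d)
 along the run R[i, i+d].\<close>
primrec histd :: "nat \<Rightarrow> ('q \<Rightarrow> 'g \<Rightarrow> ('q, 'a, 'g) tr) \<Rightarrow> (nat \<Rightarrow> ('q, 'g) conf) \<Rightarrow>
    nat \<Rightarrow> nat \<Rightarrow> nat list \<Rightarrow> nat list" where
  "histd n \<delta> R i 0 p = p"
| "histd n \<delta> R i (Suc d) p = histd n \<delta> R i d (hist_step n \<delta> (R (i + d)) (R (i + Suc d)) p)"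

definition hist0 :: "nat \<Rightarrow> ('q \<Rightarrow> 'g \<Rightarrow> ('q, 'a, 'g) tr) \<Rightarrow> (nat \<Rightarrow> ('q, 'g) conf) \<Rightarrow>
    nat \<Rightarrow> nat \<Rightarrow> 'g \<times> nat list \<Rightarrow> 'g \<times> nat list" where
  "hist0 n \<delta> R i j s0 =
     (THE z. z \<in> zs (snd (R i)) \<and> snd z = histd n \<delta> R i (j - i) (snd s0))"

definition upper0 :: "nat \<Rightarrow> ('q \<Rightarrow> 'g \<Rightarrow> ('q, 'a, 'g) tr) \<Rightarrow> (nat \<Rightarrow> ('q, 'g) conf) \<Rightarrow>
    nat \<Rightarrow> nat \<Rightarrow> bool" where
  "upper0 n \<delta> R i j \<longleftrightarrow> hist0 n \<delta> R i j (top0 n (snd (R j))) = top0 n (snd (R i))"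

definition milestone :: "nat \<Rightarrow> 'q set \<Rightarrow> 'g set \<Rightarrow> 'a set \<Rightarrow> ('q \<Rightarrow> 'g \<Rightarrow> ('q, 'a, 'g) tr) \<Rightarrow>
    'a \<Rightarrow> ('q, 'g) conf \<Rightarrow> bool" where
  "milestone n Q G A \<delta> star c \<longleftrightarrow>
     (\<exists>R. R 0 = c \<and> (\<forall>i. valid_conf n Q G (R i)) \<and>
          (\<forall>i. star_step n A \<delta> star (R i) (R (Suc i))) \<and>
          (\<exists>I. infinite I \<and> 0 \<in> I \<and>
               (\<forall>i\<in>I. \<forall>j\<in>I. i \<le> j \<longrightarrow> upper0 n \<delta> R i j)))"

end

theory Submission
  imports Defs
begin


definition pos :: "'g stk \<Rightarrow> nat list set" where "pos s = snd ` zs s"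

fun ok :: "nat \<Rightarrow> 'g stk \<Rightarrow> bool" where
  "ok 0 s = True"
| "ok (Suc d) (L ss) = (ss \<noteq> [] \<and> ok d (last ss))"
| "ok (Suc d) (Z _ _) = False"

definition tp :: "nat \<Rightarrow> 'g stk \<Rightarrow> nat list" where "tp k s = snd (zof (topd k s))"

lemma zsl_eq: "zsl ss = \<Union> (zs ` set ss)"
  by (induct ss) auto

lemma L1: "stack_of n G k s \<Longrightarrow> nonempty s \<Longrightarrow> ok k s \<and> (\<exists>g x. topd k s = Z g x \<and> (g,x) \<in> zs s)"
proof (induct k arbitrary: s)
  case 0 then show ?case by (cases s) auto
next
  case (Suc k)
  then obtain ss where s: "s = L ss" by (cases s) auto
  with Suc have ne: "ss \<noteq> []" by simp
  then have "last ss \<in> set ss" by simp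
  with Suc s have "stack_of n G k (last ss)" "nonempty (last ss)" by auto
  with Suc.hyps obtain g x where "ok k (last ss)" "topd k (last ss) = Z g x" "(g,x) \<in> zs (last ss)" by blast
  then show ?case using s ne \<open>last ss \<in> set ss\<close> by (auto simp: zsl_eq)
qed

lemma L2: "stack_of n G k s \<Longrightarrow> z \<in> zs s \<Longrightarrow> fst z \<in> G \<and> length (snd z) = n"
proof (induct k arbitrary: s)
  case 0 then show ?case by (cases s) auto
next
  case (Suc k) then show ?case by (cases s) (auto simp: zsl_eq)
qed

lemma L3: "stack_of n G (Suc k) (L ss) \<Longrightarrow> i < length ss \<Longrightarrow> z \<in> zs (ss!i) \<Longrightarrow> j < length ss \<Longrightarrow> z' \<in> zs (ss!j) \<Longrightarrow>
   snd z ! (n - Suc k) = Suc i \<and> take (n - Suc k) (snd z) = take (n - Suc k) (snd z')"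
  by auto

lemma L3a: "stack_of n G (Suc k) (L ss) \<Longrightarrow> i < length ss \<Longrightarrow> z \<in> zs (ss!i) \<Longrightarrow>
   snd z ! (n - Suc k) = Suc i"
  by auto

lemma in_zsl: "z \<in> zsl ss \<Longrightarrow> \<exists>i<length ss. z \<in> zs (ss!i)"
  by (auto simp: zsl_eq in_set_conv_nth)

lemma tp_Suc: "tp (Suc k) (L ss) = tp k (last ss)"
  by (simp add: tp_def)

lemma tp_in: "stack_of n G k s \<Longrightarrow> nonempty s \<Longrightarrow> tp k s \<in> pos s"
  using L1[of n G k s] by (force simp: tp_def pos_def)

lemma last_nth: "ss \<noteq> [] \<Longrightarrow> last ss = ss ! (length ss - 1)"
  by (simp add: last_conv_nth)

lemma L4: assumes st: "stack_of n G k s" and ne: "nonempty s" and x: "x \<in> pos s"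
  shows "take (n-k) x = take (n-k) (tp k s)"
proof (cases k)
  case 0
  then show ?thesis using L2[of n G k s] tp_in[of n G k s] st ne x
    by (cases s) (auto simp: pos_def tp_def)
next
  case (Suc k')
  obtain ss where s: "s = L ss" using st Suc by (cases s) auto
  have ssne: "ss \<noteq> []" using ne s by simp
  have "tp k' (last ss) \<in> pos (last ss)" using st s Suc ssne by (intro tp_in[of n G]) auto
  then obtain z' where z': "z' \<in> zs (ss ! (length ss - 1))" "snd z' = tp k s"
    using s Suc ssne by (auto simp: pos_def tp_Suc last_nth)
  obtain z where z: "z \<in> zsl ss" "snd z = x" using x s by (auto simp: pos_def)
  then obtain i where "i < length ss" "z \<in> zs (ss!i)" using in_zsl by blast
  with L3[OF st[unfolded s Suc], of i z "length ss - 1" z'] z z' ssne Suc show ?thesis by auto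
qed

lemma take_eq_nth: "take i x = take i y \<Longrightarrow> j < i \<Longrightarrow> j < length x \<Longrightarrow> x ! j = y ! j"
  by (metis nth_take)

lemma L5: "stack_of n G k s \<Longrightarrow> nonempty s \<Longrightarrow> k \<le> n \<Longrightarrow> x \<in> pos s \<Longrightarrow> i < n \<Longrightarrow>
   take i x = take i (tp k s) \<Longrightarrow> x ! i \<le> tp k s ! i"
proof (induct k arbitrary: s x i)
  case 0 then show ?case by (cases s) (auto simp: pos_def tp_def)
next
  case (Suc k)
  then obtain ss where s: "s = L ss" by (cases s) auto
  have ssne: "ss \<noteq> []" using Suc s by simp
  have st: "stack_of n G (Suc k) (L ss)" using Suc s by simp
  have lst: "stack_of n G k (last ss)" "nonempty (last ss)" using st ssne by auto
  have "tp k (last ss) \<in> pos (last ss)" using lst by (rule tp_in)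
  then obtain z' where z': "z' \<in> zs (ss ! (length ss - 1))" "snd z' = tp (Suc k) s"
    using s ssne by (auto simp: pos_def tp_Suc last_nth)
  obtain z where z: "z \<in> zsl ss" "snd z = x" using Suc.prems s by (auto simp: pos_def)
  then obtain a where a: "a < length ss" "z \<in> zs (ss!a)" using in_zsl by blast
  have I: "snd z ! (n - Suc k) = Suc a" "snd z' ! (n - Suc k) = length ss"
    using L3a[OF st a] L3a[OF st _ z'(1)] ssne by auto
  have ln: "length x = n" using L2[OF Suc.prems(1), of z] z s by simp
  consider "i < n - Suc k" | "i = n - Suc k" | "n - Suc k < i" by linarith
  then show ?case
  proof cases
    case 1
    have "take (n - Suc k) x = take (n - Suc k) (tp (Suc k) s)" using L4[OF Suc.prems(1,2,4)] .
    then have "x ! i = tp (Suc k) s ! i" using take_eq_nth 1 ln Suc.prems(5) by metis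
    then show ?thesis by simp
  next
    case 2 then show ?thesis using I z z' a by auto
  next
    case 3
    then have "x ! (n - Suc k) = tp (Suc k) s ! (n - Suc k)"
      using take_eq_nth[OF Suc.prems(6), of "n - Suc k"] ln Suc.prems(5) by simp
    then have "Suc a = length ss" using I z z' by simp
    then have "ss ! a = last ss" using ssne by (metis diff_Suc_1 last_nth)
    then have "x \<in> pos (last ss)" using a z by (auto simp: pos_def)
    then show ?thesis using Suc.hyps[OF lst _ _ Suc.prems(5)] Suc.prems s 3 by (auto simp: tp_Suc)
  qed
qed

lemma L6: "stack_of n G k s \<Longrightarrow> z \<in> zs s \<Longrightarrow> z' \<in> zs s \<Longrightarrow> snd z = snd z' \<Longrightarrow> z = z'"
proof (induct k arbitrary: s)
  case 0 then show ?case by (cases s) auto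
next
  case (Suc k)
  then obtain ss where s: "s = L ss" by (cases s) auto
  have st: "stack_of n G (Suc k) (L ss)" using Suc.prems(1) s by simp
  have "z \<in> zsl ss" using Suc.prems(2) s by simp
  then obtain a where a: "a < length ss" "z \<in> zs (ss!a)" using in_zsl by blast
  have "z' \<in> zsl ss" using Suc.prems(3) s by simp
  then obtain b where b: "b < length ss" "z' \<in> zs (ss!b)" using in_zsl by blast
  have "Suc a = Suc b" using L3a[OF st a] L3a[OF st b] Suc.prems(4) by metis
  then have ab: "a = b" by simp
  have "stack_of n G k (ss!a)" using st a(1) by (simp add: nth_mem)
  then show ?case using Suc.hyps[of "ss!a"] a b ab Suc.prems(4) by blast
qed

lemma L7: "stack_of n G k s \<Longrightarrow> nonempty s \<Longrightarrow> k \<le> n \<Longrightarrow> e \<le> k \<Longrightarrow>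
   pos (topd e s) = {x\<in>pos s. take (n-k+e) x = take (n-k+e) (tp k s)}"
proof (induct k arbitrary: s e)
  case 0 then show ?case using L4[of n G 0 s] by auto
next
  case (Suc k)
  show ?case
  proof (cases e)
    case 0 then show ?thesis using L4[of n G "Suc k" s] Suc.prems by auto
  next
    case (Suc e')
    obtain ss where s: "s = L ss" using Suc.prems(1) by (cases s) auto
    have ssne: "ss \<noteq> []" using Suc.prems(2) s by simp
    have st: "stack_of n G (Suc k) (L ss)" using Suc.prems(1) s by simp
    have lst: "stack_of n G k (last ss)" "nonempty (last ss)" using st ssne by auto
    have eq: "n - Suc k + Suc e' = n - k + e'" using Suc.prems(3) by simp
    have IH: "pos (topd e' (last ss)) = {x\<in>pos (last ss). take (n-k+e') x = take (n-k+e') (tp k (last ss))}"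
      using Suc.hyps[OF lst] Suc.prems(3,4) \<open>e = Suc e'\<close> by simp
    have "tp k (last ss) \<in> pos (last ss)" using lst by (rule tp_in)
    then obtain z' where z': "z' \<in> zs (ss ! (length ss - 1))" "snd z' = tp k (last ss)"
      using ssne by (auto simp: pos_def last_nth)
    have "zs (last ss) \<subseteq> zs (L ss)" using ssne last_in_set by (fastforce simp: zsl_eq)
    then have sub: "pos (last ss) \<subseteq> pos (L ss)" by (auto simp: pos_def)
    have sup: "x \<in> pos (last ss)" if "x \<in> pos (L ss)" "take (n-k+e') x = take (n-k+e') (tp k (last ss))" for x
    proof -
      have "x \<in> snd ` zsl ss" using that(1) by (simp add: pos_def)
      then obtain z where z: "z \<in> zsl ss" "snd z = x" by blast
      then obtain a where a: "a < length ss" "z \<in> zs (ss!a)" using in_zsl by blast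
      have I: "snd z ! (n - Suc k) = Suc a" "snd z' ! (n - Suc k) = length ss"
        using L3a[OF st a] L3a[OF st _ z'(1)] ssne by auto
      have ln: "length x = n" using L2[OF st, of z] z by simp
      have "x ! (n - Suc k) = tp k (last ss) ! (n - Suc k)"
        using take_eq_nth[OF that(2), of "n - Suc k"] ln Suc.prems(3) by simp
      then have "Suc a = length ss" using I z z' by simp
      then have "ss ! a = last ss" using ssne by (metis diff_Suc_1 last_nth)
      then show ?thesis using a z by (auto simp: pos_def)
    qed
    have "topd e s = topd e' (last ss)" using s \<open>e = Suc e'\<close> by simp
    moreover have "tp (Suc k) s = tp k (last ss)" using s by (simp add: tp_Suc)
    moreover have "n - Suc k + e = n - k + e'" using eq \<open>e = Suc e'\<close> by simp
    moreover have "{x\<in>pos (last ss). take (n-k+e') x = take (n-k+e') (tp k (last ss))}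
       = {x\<in>pos (L ss). take (n-k+e') x = take (n-k+e') (tp k (last ss))}"
      using sub sup by blast
    ultimately show ?thesis using IH s by simp
  qed
qed



lemma ok_mono: "ok a s \<Longrightarrow> b \<le> a \<Longrightarrow> ok b s"
proof (induct a arbitrary: s b)
  case 0 then show ?case by simp
next
  case (Suc a) then show ?case
    by (cases s; cases b) auto
qed

lemma topd_Z: "topd b (Z g x) = Z g x"
  by (cases b) auto

lemma topd_add: "topd (a + b) s = topd b (topd a s)"
proof (induct a arbitrary: s)
  case 0 then show ?case by simp
next
  case (Suc a) then show ?case by (cases s) (auto simp: topd_Z)
qed

lemma ok_topd: "ok (a + b) s \<Longrightarrow> ok b (topd a s)"
proof (induct a arbitrary: s)
  case 0 then show ?case by simp
next
  case (Suc a) then show ?case by (cases s) auto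
qed

lemma ok_Suc_topd: "ok (Suc d) s \<Longrightarrow> \<exists>ss. topd d s = L ss \<and> ss \<noteq> [] \<and> last ss = topd (Suc d) s"
proof (induct d arbitrary: s)
  case 0 then show ?case by (cases s) auto
next
  case (Suc d) then show ?case by (cases s) auto
qed

lemma O1: "ok d s \<Longrightarrow> topd d s = L ss \<Longrightarrow> topd d (modtop d f s) = L (f ss)"
proof (induct d arbitrary: s)
  case 0 then show ?case by (cases s) auto
next
  case (Suc d) then show ?case by (cases s) auto
qed

lemma zsl_append: "zsl (xs @ ys) = zsl xs \<union> zsl ys"
  by (simp add: zsl_eq)

lemma O2: "ok d s \<Longrightarrow> topd d s = L ss \<Longrightarrow> zs (modtop d f s) \<subseteq> zs s \<union> zsl (f ss)"
proof (induct d arbitrary: s)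
  case 0 then show ?case by (cases s) auto
next
  case (Suc d)
  then obtain ts where s: "s = L ts" "ts \<noteq> []" "ok d (last ts)" "topd d (last ts) = L ss" by (cases s) auto
  have "zs (modtop (Suc d) f s) = zsl (butlast ts) \<union> zs (modtop d f (last ts))"
    using s by (simp add: zsl_append)
  also have "\<dots> \<subseteq> zsl (butlast ts) \<union> zs (last ts) \<union> zsl (f ss)" using Suc.hyps[OF s(3,4)] by blast
  also have "zsl (butlast ts) \<union> zs (last ts) = zs s"
    using s(1,2) zsl_append[of "butlast ts" "[last ts]"] by (simp add: snoc_eq_iff_butlast)
  finally show ?case by blast
qed

lemma O3: "ok k s \<Longrightarrow> pos (modz k \<gamma> s) = pos s"
proof (induct k arbitrary: s)
  case 0 then show ?case by (cases s) (auto simp: pos_def)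
next
  case (Suc k)
  then obtain ts where s: "s = L ts" "ts \<noteq> []" "ok k (last ts)" by (cases s) auto
  have e1: "zs (modz (Suc k) \<gamma> s) = zsl (butlast ts) \<union> zs (modz k \<gamma> (last ts))"
    using s by (simp add: zsl_append)
  have e2: "zs s = zsl (butlast ts) \<union> zs (last ts)"
    using s(1,2) zsl_append[of "butlast ts" "[last ts]"] by (simp add: snoc_eq_iff_butlast)
  show ?case using e1 e2 Suc.hyps[OF s(3)] by (simp add: pos_def image_Un)
qed

lemma O4: "zs (pinc j s) = (\<lambda>(g,x). (g, x[j := Suc (x!j)])) ` zs s"
  by (induct s) (auto simp: zsl_eq)

lemma O4': "pos (pinc j s) = (\<lambda>x. x[j := Suc (x!j)]) ` pos s"
  by (auto simp: pos_def O4 image_image split_beta)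



lemma Vn: assumes "stack_of n G n s" "nonempty s"
  shows "tp n s \<in> pos s" "\<And>x. x \<in> pos s \<Longrightarrow> length x = n"
    "\<And>x i. x \<in> pos s \<Longrightarrow> i < n \<Longrightarrow> take i x = take i (tp n s) \<Longrightarrow> x ! i \<le> tp n s ! i"
    "\<And>e. e \<le> n \<Longrightarrow> pos (topd e s) = {x\<in>pos s. take e x = take e (tp n s)}"
    "top0 n s \<in> zs s" "snd (top0 n s) = tp n s" "ok n s"
    "\<And>z z'. z \<in> zs s \<Longrightarrow> z' \<in> zs s \<Longrightarrow> snd z = snd z' \<Longrightarrow> z = z'"
    "fst (top0 n s) \<in> G"
proof -
  show "tp n s \<in> pos s" using tp_in[OF assms] .
  show "\<And>x. x \<in> pos s \<Longrightarrow> length x = n" using L2[OF assms(1)] by (auto simp: pos_def)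
  show "\<And>x i. x \<in> pos s \<Longrightarrow> i < n \<Longrightarrow> take i x = take i (tp n s) \<Longrightarrow> x ! i \<le> tp n s ! i"
    using L5[OF assms] by blast
  show "\<And>e. e \<le> n \<Longrightarrow> pos (topd e s) = {x\<in>pos s. take e x = take e (tp n s)}"
    using L7[OF assms] by simp
  obtain g x where gx: "ok n s" "topd n s = Z g x" "(g,x) \<in> zs s" using L1[OF assms] by blast
  then show "top0 n s \<in> zs s" "snd (top0 n s) = tp n s" "ok n s"
    by (auto simp: top0_def tp_def)
  show "\<And>z z'. z \<in> zs s \<Longrightarrow> z' \<in> zs s \<Longrightarrow> snd z = snd z' \<Longrightarrow> z = z'" using L6[OF assms(1)] by blast
  show "fst (top0 n s) \<in> G" using L2[OF assms(1)] gx by (auto simp: top0_def)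
qed

lemma valid_stack: "valid_conf n Q G c \<Longrightarrow> stack_of n G n (snd c) \<and> nonempty (snd c) \<and> fst c \<in> Q"
  by (simp add: valid_conf_def)

lemma step_cases:
  assumes dp: "dpda n Q G A \<delta>" and st: "star_step n A \<delta> star c c'"
    and v: "valid_conf n Q G c" and v': "valid_conf n Q G c'"
  shows "(hist_step n \<delta> c c' = id \<and> pos (snd c') \<subseteq> pos (snd c)) \<or>
    (\<exists>r \<gamma>. 1 \<le> r \<and> r \<le> n \<and>
       snd c' = modtop (n-r) (\<lambda>ss. ss @ [pinc (n-r) (modz (r-1) \<gamma> (last ss))]) (snd c) \<and>
       hist_step n \<delta> c c' = (\<lambda>p. if p \<in> pos (topd (Suc (n-r)) (snd c')) then p[n-r := p!(n-r) - 1] else p))"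
proof -
  define s where "s = snd c"
  have sv: "stack_of n G n s" "nonempty s" "fst c \<in> Q" using valid_stack[OF v] s_def by auto
  have tsG: "topsym n s \<in> G" using Vn(9)[OF sv(1,2)] by (simp add: topsym_def)
  have okn: "ok n s" using Vn(7)[OF sv(1,2)] .
  show ?thesis
  proof (cases "\<delta> (fst c) (topsym n s)")
    case (Read f)
    then have "snd c' = snd c" using st by (auto simp: star_step_def step_def s_def)
    moreover have "hist_step n \<delta> c c' = id" using Read by (auto simp: hist_step_def s_def)
    ultimately show ?thesis by simp
  next
    case (Op q op)
    have ao: "apply_op n op s = Some (snd c')" using st Op by (auto simp: star_step_def step_def s_def)
    have ook: "op_ok n G op" using dp sv(3) tsG Op unfolding dpda_def by fastforce
    show ?thesis
    proof (cases op)
      case (Pop k)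
      have k: "1 \<le> k" "k \<le> n" using ook Pop by (auto simp: op_ok_def)
      have s': "snd c' = modtop (n-k) butlast s" using ao Pop by (auto split: if_splits)
      have "ok (Suc (n-k)) s" using okn k ok_mono by fastforce
      then obtain ss where ss: "topd (n-k) s = L ss" "ss \<noteq> []" using ok_Suc_topd by blast
      have okd: "ok (n-k) s" using okn ok_mono by fastforce
      have "zs (snd c') \<subseteq> zs s \<union> zsl (butlast ss)" using O2[OF okd ss(1)] s' by simp
      moreover have "zsl (butlast ss) \<subseteq> zs (topd (n-k) s)" using ss(1)
        by (auto simp: zsl_eq dest: in_set_butlastD)
      moreover have "pos (topd (n-k) s) \<subseteq> pos s" using Vn(4)[OF sv(1,2), of "n-k"] by auto
      ultimately have "pos (snd c') \<subseteq> pos s" unfolding pos_def by blast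
      moreover have "hist_step n \<delta> c c' = id" using Op Pop by (auto simp: hist_step_def s_def)
      ultimately show ?thesis using s_def by simp
    next
      case (Push r \<gamma>)
      have r: "1 \<le> r" "r \<le> n" using ook Push by (auto simp: op_ok_def)
      have s': "snd c' = modtop (n-r) (\<lambda>ss. ss @ [pinc (n-r) (modz (r-1) \<gamma> (last ss))]) s"
        using ao Push by auto
      have e: "n - (r - 1) = Suc (n - r)" using r by simp
      have "hist_step n \<delta> c c' = (\<lambda>p. if p \<in> pos (topd (Suc (n-r)) (snd c')) then p[n-r := p!(n-r) - 1] else p)"
        using Op Push e by (auto simp: hist_step_def s_def pos_def)
      then show ?thesis using r s' s_def by blast
    qed
  qed
qed



definition dif :: "nat \<Rightarrow> nat list \<Rightarrow> nat list \<Rightarrow> bool" where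
  "dif i x y \<longleftrightarrow> i < length x \<and> take i x = take i y \<and> x ! i \<noteq> y ! i"

lemma take_nth_eq: "take j x = take j y \<Longrightarrow> i < j \<Longrightarrow> x ! i = y ! i"
proof -
  assume a: "take j x = take j y" "i < j"
  have "take j x ! i = x ! i" using a(2) by (rule nth_take)
  moreover have "take j y ! i = y ! i" using a(2) by (rule nth_take)
  ultimately show ?thesis using a(1) by simp
qed

lemma take_le: "take j x = take j y \<Longrightarrow> k \<le> j \<Longrightarrow> take k x = take k y"
proof -
  assume a: "take j x = take j y" "k \<le> j"
  have "take k (take j x) = take k (take j y)" using a(1) by simp
  then show ?thesis using a(2) by (simp add: min_absorb1)
qed

lemma dif_unique: "dif i x y \<Longrightarrow> dif j x y \<Longrightarrow> i = j"
  unfolding dif_def using take_nth_eq by (metis linorder_neqE_nat)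

lemma dif_sym: "length x = length y \<Longrightarrow> dif i x y \<Longrightarrow> dif i y x"
  unfolding dif_def by auto

lemma dif_ex: "length x = length y \<Longrightarrow> x \<noteq> y \<Longrightarrow> \<exists>i. dif i x y"
proof (induct x arbitrary: y)
  case Nil then show ?case by simp
next
  case (Cons a x)
  then obtain b y' where y: "y = b # y'" by (cases y) auto
  show ?case
  proof (cases "a = b")
    case True
    then have "x \<noteq> y'" "length x = length y'" using Cons y by auto
    then obtain i where "dif i x y'" using Cons by blast
    then have "dif (Suc i) (a # x) y" using y True by (simp add: dif_def)
    then show ?thesis by blast
  next
    case False
    then have "dif 0 (a # x) y" using y by (simp add: dif_def)
    then show ?thesis by blast
  qed
qed

lemma dif_neq: "dif i x y \<Longrightarrow> x \<noteq> y"
  by (auto simp: dif_def)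

definition concl :: "nat \<Rightarrow> nat \<Rightarrow> nat list \<Rightarrow> nat list \<Rightarrow> nat list \<Rightarrow> nat list \<Rightarrow> bool" where
  "concl i j q q' p p' \<longleftrightarrow> i < j \<or> (i = j \<and> (q!i < q'!i \<longleftrightarrow> p!i < p'!i))"

lemma mixed:
  assumes ln: "length q = n" "length q' = n" "length T = n" and d: "d < n"
    and qT: "take (Suc d) q = take (Suc d) T" and q'T: "take (Suc d) q' \<noteq> take (Suc d) T"
    and lm: "\<And>i. i < n \<Longrightarrow> take i q' = take i T \<Longrightarrow> q'!i \<le> T!i"
    and di: "dif i q q'" and dj: "dif j (q[d := q!d - 1]) q'"
  shows "concl i j q q' (q[d := q!d - 1]) q'"
proof -
  define h where "h = q[d := q!d - 1]"
  have iled: "i \<le> d"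
  proof (rule ccontr)
    assume "\<not> i \<le> d"
    then have "Suc d \<le> i" by simp
    then have "take (Suc d) q = take (Suc d) q'" using di unfolding dif_def
      using take_le by blast
    then show False using qT q'T by simp
  qed
  show ?thesis
  proof (cases "i < d")
    case True
    have "take i h = take i q" unfolding h_def using True by (simp add: take_update_cancel)
    moreover have "h ! i = q ! i" unfolding h_def using True by simp
    ultimately have "dif i h q'" using di ln unfolding dif_def h_def by simp
    then have "j = i" using dj dif_unique unfolding h_def by blast
    then show ?thesis using \<open>h ! i = q ! i\<close> unfolding concl_def h_def by simp
  next
    case False
    then have id: "i = d" using iled by simp
    have tq: "take d q' = take d q" using di id unfolding dif_def by simp
    have "take d q = take d T" using take_le[OF qT] by simp
    moreover have "q ! d = T ! d" using take_nth_eq[OF qT] by simp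
    ultimately have "q' ! d \<le> q ! d" using lm[OF d] tq by simp
    moreover have "q' ! d \<noteq> q ! d" using di id unfolding dif_def by simp
    ultimately have lt: "q' ! d < q ! d" by simp
    have hd: "h ! d = q ! d - 1" unfolding h_def using ln d by simp
    have th: "take d h = take d q" unfolding h_def by (simp add: take_update_cancel)
    show ?thesis
    proof (cases "h ! d = q' ! d")
      case False
      then have "dif d h q'" using th tq ln d unfolding dif_def h_def by simp
      then have "j = d" using dj dif_unique unfolding h_def by blast
      then show ?thesis using id lt hd False unfolding concl_def h_def[symmetric] by auto
    next
      case True
      have lh: "length h = n" unfolding h_def using ln by simp
      have "take (Suc d) h = take (Suc d) q'" using th tq True lh ln d
        by (simp add: take_Suc_conv_app_nth)
      have "d < j"
      proof (rule ccontr)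
        assume "\<not> d < j"
        then have "j < Suc d" by simp
        then have "h ! j = q' ! j" using take_nth_eq[OF \<open>take (Suc d) h = take (Suc d) q'\<close>] by blast
        then show False using dj unfolding dif_def h_def[symmetric] by simp
      qed
      then show ?thesis using id unfolding concl_def by simp
    qed
  qed
qed

lemma both_in:
  assumes ln: "length q = n" "length q' = n" and d: "d < n"
    and qq: "take (Suc d) q = take (Suc d) q'"
    and di: "dif i q q'" and dj: "dif j (q[d := q!d - 1]) (q'[d := q'!d - 1])"
  shows "concl i j q q' (q[d := q!d - 1]) (q'[d := q'!d - 1])"
proof -
  have "d < i"
  proof (rule ccontr)
    assume "\<not> d < i"
    then have "i < Suc d" by simp
    then have "q ! i = q' ! i" using take_nth_eq[OF qq] by blast
    then show False using di unfolding dif_def by simp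
  qed
  have qd: "q ! d = q' ! d" using take_nth_eq[OF qq] by simp
  have "dif i (q[d := q!d - 1]) (q'[d := q'!d - 1])"
    using di \<open>d < i\<close> qd unfolding dif_def by (simp add: take_update_swap)
  then have "j = i" using dj dif_unique by blast
  then show ?thesis using \<open>d < i\<close> unfolding concl_def by simp
qed



lemma push_facts:
  assumes sv: "stack_of n G n s" "nonempty s" and r: "1 \<le> r" "r \<le> n"
    and s': "s' = modtop (n-r) (\<lambda>ss. ss @ [pinc (n-r) (modz (r-1) \<gamma> (last ss))]) s"
  shows "\<And>p. p \<in> pos (topd (Suc (n-r)) s') \<Longrightarrow> p[n-r := p!(n-r) - 1] \<in> pos s"
    and "pos s' \<subseteq> pos s \<union> pos (topd (Suc (n-r)) s')"
proof -
  define d where "d = n - r"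
  have dn: "d < n" "Suc d \<le> n" using r d_def by auto
  have okn: "ok n s" using Vn(7)[OF sv] .
  have "ok (Suc d) s" using okn dn ok_mono by blast
  then obtain ss where ss: "topd d s = L ss" "ss \<noteq> []" "last ss = topd (Suc d) s"
    using ok_Suc_topd by blast
  have okd: "ok d s" using okn dn ok_mono by (meson less_imp_le)
  define new where "new = pinc d (modz (r-1) \<gamma> (last ss))"
  have s'': "s' = modtop d (\<lambda>ss. ss @ [pinc d (modz (r-1) \<gamma> (last ss))]) s" using s' d_def by simp
  have T1: "topd d s' = L (ss @ [new])" using O1[OF okd ss(1)] s'' new_def by simp
  have "topd (d + 1) s' = topd 1 (topd d s')" by (rule topd_add)
  then have T2: "topd (Suc d) s' = new" using T1 by simp
  have "Suc d + (r - 1) = n" using r d_def by simp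
  then have okr: "ok (r-1) (last ss)" using ok_topd[of "Suc d" "r-1" s] okn ss(3) by simp
  have posnew: "pos new = (\<lambda>x. x[d := Suc (x!d)]) ` pos (last ss)"
    unfolding new_def O4' O3[OF okr] ..
  have lsub: "pos (last ss) \<subseteq> pos s" using Vn(4)[OF sv dn(2)] ss(3) by auto
  show "\<And>p. p \<in> pos (topd (Suc (n-r)) s') \<Longrightarrow> p[n-r := p!(n-r) - 1] \<in> pos s"
  proof -
    fix p assume "p \<in> pos (topd (Suc (n-r)) s')"
    then have "p \<in> pos new" using T2 d_def by simp
    then obtain x where x: "x \<in> pos (last ss)" "p = x[d := Suc (x!d)]" using posnew by blast
    have "length x = n" using Vn(2)[OF sv] x lsub by blast
    then have "p[d := p!d - 1] = x" using x dn by simp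
    then show "p[n-r := p!(n-r) - 1] \<in> pos s" using x lsub d_def by auto
  qed
  have "zs s' \<subseteq> zs s \<union> zsl (ss @ [new])" using O2[OF okd ss(1)] s'' new_def by simp
  moreover have "zsl (ss @ [new]) = zs (topd d s) \<union> zs new" using ss(1) by (simp add: zsl_append)
  moreover have "pos (topd d s) \<subseteq> pos s" using Vn(4)[OF sv, of d] dn by auto
  ultimately have "pos s' \<subseteq> pos s \<union> pos new" unfolding pos_def by blast
  then show "pos s' \<subseteq> pos s \<union> pos (topd (Suc (n-r)) s')" using T2 d_def by simp
qed

lemma SE:
  assumes dp: "dpda n Q G A \<delta>" and st: "star_step n A \<delta> star c c'"
    and v: "valid_conf n Q G c" and v': "valid_conf n Q G c'"
    and p: "p \<in> pos (snd c')"
  shows "hist_step n \<delta> c c' p \<in> pos (snd c)"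
  using step_cases[OF dp st v v']
proof
  assume "hist_step n \<delta> c c' = id \<and> pos (snd c') \<subseteq> pos (snd c)"
  then show ?thesis using p by auto
next
  assume "\<exists>r \<gamma>. 1 \<le> r \<and> r \<le> n \<and>
       snd c' = modtop (n-r) (\<lambda>ss. ss @ [pinc (n-r) (modz (r-1) \<gamma> (last ss))]) (snd c) \<and>
       hist_step n \<delta> c c' = (\<lambda>p. if p \<in> pos (topd (Suc (n-r)) (snd c')) then p[n-r := p!(n-r) - 1] else p)"
  then obtain r \<gamma> where r: "1 \<le> r" "r \<le> n"
    "snd c' = modtop (n-r) (\<lambda>ss. ss @ [pinc (n-r) (modz (r-1) \<gamma> (last ss))]) (snd c)"
    "hist_step n \<delta> c c' = (\<lambda>p. if p \<in> pos (topd (Suc (n-r)) (snd c')) then p[n-r := p!(n-r) - 1] else p)"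
    by blast
  have sv: "stack_of n G n (snd c)" "nonempty (snd c)" using valid_stack[OF v] by auto
  show ?thesis using push_facts[OF sv r(1,2,3)] p r(4) by auto
qed

lemma concl_swap: "dif i q q' \<Longrightarrow> dif j p p' \<Longrightarrow> concl i j q' q p' p \<Longrightarrow> concl i j q q' p p'"
  unfolding concl_def dif_def by auto

lemma concl_trans: "concl i i' q q' p p' \<Longrightarrow> concl i' j p p' r r' \<Longrightarrow> concl i j q q' r r'"
  unfolding concl_def by auto

lemma SO:
  assumes dp: "dpda n Q G A \<delta>" and st: "star_step n A \<delta> star c c'"
    and v: "valid_conf n Q G c" and v': "valid_conf n Q G c'"
    and q: "q \<in> pos (snd c')" and q': "q' \<in> pos (snd c')"
    and di: "dif i q q'" and dj: "dif j (hist_step n \<delta> c c' q) (hist_step n \<delta> c c' q')"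
  shows "concl i j q q' (hist_step n \<delta> c c' q) (hist_step n \<delta> c c' q')"
  using step_cases[OF dp st v v']
proof
  assume a: "hist_step n \<delta> c c' = id \<and> pos (snd c') \<subseteq> pos (snd c)"
  then have "j = i" using di dj dif_unique by auto
  then show ?thesis using a unfolding concl_def by simp
next
  assume "\<exists>r \<gamma>. 1 \<le> r \<and> r \<le> n \<and>
       snd c' = modtop (n-r) (\<lambda>ss. ss @ [pinc (n-r) (modz (r-1) \<gamma> (last ss))]) (snd c) \<and>
       hist_step n \<delta> c c' = (\<lambda>p. if p \<in> pos (topd (Suc (n-r)) (snd c')) then p[n-r := p!(n-r) - 1] else p)"
  then obtain r \<gamma> where r: "1 \<le> r" "r \<le> n"
    "hist_step n \<delta> c c' = (\<lambda>p. if p \<in> pos (topd (Suc (n-r)) (snd c')) then p[n-r := p!(n-r) - 1] else p)"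
    by blast
  define d where "d = n - r"
  define M where "M = pos (topd (Suc d) (snd c'))"
  define T where "T = tp n (snd c')"
  have sv': "stack_of n G n (snd c')" "nonempty (snd c')" using valid_stack[OF v'] by auto
  have dn: "d < n" "Suc d \<le> n" using r d_def by auto
  have h: "hist_step n \<delta> c c' = (\<lambda>p. if p \<in> M then p[d := p!d - 1] else p)"
    using r(3) unfolding M_def d_def by simp
  have Mc: "M = {x\<in>pos (snd c'). take (Suc d) x = take (Suc d) T}"
    using Vn(4)[OF sv' dn(2)] M_def T_def by simp
  have ln: "length q = n" "length q' = n" "length T = n"
    using Vn(2)[OF sv'] q q' Vn(1)[OF sv'] T_def by auto
  have lm: "\<And>x i. x \<in> pos (snd c') \<Longrightarrow> i < n \<Longrightarrow> take i x = take i T \<Longrightarrow> x ! i \<le> T ! i"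
    using Vn(3)[OF sv'] T_def by blast
  consider "q \<in> M" "q' \<in> M" | "q \<in> M" "q' \<notin> M" | "q \<notin> M" "q' \<in> M" | "q \<notin> M" "q' \<notin> M" by blast
  then show ?thesis
  proof cases
    case 1
    have "take (Suc d) q = take (Suc d) q'" using 1 Mc by simp
    then show ?thesis using both_in[OF ln(1,2) dn(1) _ di] dj 1 h by simp
  next
    case 2
    have qT: "take (Suc d) q = take (Suc d) T" using 2 Mc by simp
    have q'T: "take (Suc d) q' \<noteq> take (Suc d) T" using 2 Mc q' by simp
    show ?thesis using mixed[OF ln dn(1) qT q'T lm[OF q'] di] dj 2 h by simp
  next
    case 3
    have qT: "take (Suc d) q' = take (Suc d) T" using 3 Mc by simp
    have q'T: "take (Suc d) q \<noteq> take (Suc d) T" using 3 Mc q by simp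
    have di': "dif i q' q" using dif_sym[OF _ di] ln by simp
    have lh: "length (q'[d := q'!d - 1]) = length q" using ln by simp
    have dj': "dif j (q'[d := q'!d - 1]) q" using dj 3 h dif_sym[OF _ dj] ln by simp
    have "concl i j q' q (q'[d := q'!d - 1]) q"
      using mixed[OF ln(2,1,3) dn(1) qT q'T lm[OF q] di' dj'] .
    then show ?thesis using concl_swap[OF di] dj 3 h by simp
  next
    case 4
    then have "j = i" using di dj dif_unique h by auto
    then show ?thesis using 4 h unfolding concl_def by simp
  qed
qed



definition srun :: "nat \<Rightarrow> 'q set \<Rightarrow> 'g set \<Rightarrow> 'a set \<Rightarrow> ('q \<Rightarrow> 'g \<Rightarrow> ('q, 'a, 'g) tr) \<Rightarrow> 'a \<Rightarrow> (nat \<Rightarrow> ('q, 'g) conf) \<Rightarrow> bool" where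
  "srun n Q G A \<delta> star S \<longleftrightarrow> (\<forall>t. valid_conf n Q G (S t)) \<and> (\<forall>t. star_step n A \<delta> star (S t) (S (Suc t)))"

lemma histd_comp: "histd n \<delta> R i (a + b) p = histd n \<delta> R i a (histd n \<delta> R (i + a) b p)"
  by (induct b arbitrary: p) (simp_all add: add.assoc)

lemma histd_shift: "histd n \<delta> (\<lambda>t. R (m + t)) i d p = histd n \<delta> R (m + i) d p"
  by (induct d arbitrary: p) (simp_all add: add.assoc)

lemma histd_cong: "(\<And>t. t \<le> d \<Longrightarrow> R (i + t) = R' (i + t)) \<Longrightarrow> histd n \<delta> R i d p = histd n \<delta> R' i d p"
proof (induct d arbitrary: p)
  case 0 then show ?case by simp
next
  case (Suc d)
  have "R (i + d) = R' (i + d)" using Suc.prems[of d] by simp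
  moreover have "R (Suc (i + d)) = R' (Suc (i + d))" using Suc.prems[of "Suc d"] by simp
  ultimately show ?case using Suc.hyps Suc.prems by simp
qed

lemma inf_ge: "infinite (J::nat set) \<Longrightarrow> \<exists>c\<in>J. b \<le> c"
proof (rule ccontr)
  assume "infinite J" "\<not> (\<exists>c\<in>J. b \<le> c)"
  then have "J \<subseteq> {..<b}" by auto
  then have "finite J" using finite_subset by blast
  then show False using \<open>infinite J\<close> by simp
qed

lemma ME:
  assumes dp: "dpda n Q G A \<delta>" and S: "srun n Q G A \<delta> star S"
  shows "p \<in> pos (snd (S (s + k))) \<Longrightarrow> histd n \<delta> S s k p \<in> pos (snd (S s))"
proof (induct k arbitrary: p)
  case 0 then show ?case by simp
next
  case (Suc k)
  have "hist_step n \<delta> (S (s + k)) (S (s + Suc k)) p \<in> pos (snd (S (s + k)))"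
    using SE[OF dp, of star "S (s+k)" "S (Suc (s+k))"] S Suc.prems unfolding srun_def by simp
  then show ?case using Suc.hyps by simp
qed

lemma MO:
  assumes dp: "dpda n Q G A \<delta>" and S: "srun n Q G A \<delta> star S"
  shows "q \<in> pos (snd (S (s + k))) \<Longrightarrow> q' \<in> pos (snd (S (s + k))) \<Longrightarrow> dif i q q' \<Longrightarrow>
     dif j (histd n \<delta> S s k q) (histd n \<delta> S s k q') \<Longrightarrow>
     concl i j q q' (histd n \<delta> S s k q) (histd n \<delta> S s k q')"
proof (induct k arbitrary: q q' i)
  case 0
  then have "j = i" using dif_unique by auto
  then show ?case unfolding concl_def by simp
next
  case (Suc k)
  define p where "p = hist_step n \<delta> (S (s + k)) (S (s + Suc k)) q"
  define p' where "p' = hist_step n \<delta> (S (s + k)) (S (s + Suc k)) q'"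
  have st: "star_step n A \<delta> star (S (s+k)) (S (s + Suc k))" "valid_conf n Q G (S (s+k))"
    "valid_conf n Q G (S (s + Suc k))" using S unfolding srun_def by auto
  have pp: "p \<in> pos (snd (S (s + k)))" "p' \<in> pos (snd (S (s + k)))"
    using SE[OF dp st] Suc.prems p_def p'_def by auto
  have sv: "stack_of n G n (snd (S (s+k)))" "nonempty (snd (S (s+k)))" using valid_stack[OF st(2)] by auto
  have "histd n \<delta> S s k p \<noteq> histd n \<delta> S s k p'" using Suc.prems(4) dif_neq p_def p'_def by simp
  then have "p \<noteq> p'" by auto
  moreover have "length p = length p'" using Vn(2)[OF sv] pp by simp
  ultimately obtain i' where i': "dif i' p p'" using dif_ex by blast
  have c1: "concl i i' q q' p p'" using SO[OF dp st Suc.prems(1,2,3)] i' p_def p'_def by simp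
  have c2: "concl i' j p p' (histd n \<delta> S s k p) (histd n \<delta> S s k p')"
    using Suc.hyps[OF pp i'] Suc.prems(4) p_def p'_def by simp
  show ?case using concl_trans[OF c1 c2] p_def p'_def by simp
qed

lemma upper_iff:
  assumes dp: "dpda n Q G A \<delta>" and S: "srun n Q G A \<delta> star S" and ij: "i \<le> j"
  shows "upper0 n \<delta> S i j \<longleftrightarrow> histd n \<delta> S i (j - i) (tp n (snd (S j))) = tp n (snd (S i))"
proof -
  have vi: "stack_of n G n (snd (S i))" "nonempty (snd (S i))" using S valid_stack unfolding srun_def by blast+
  have vj: "stack_of n G n (snd (S j))" "nonempty (snd (S j))" using S valid_stack unfolding srun_def by blast+
  define P where "P = histd n \<delta> S i (j - i) (tp n (snd (S j)))"
  have "S (i + (j - i)) = S j" using ij by simp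
  then have "P \<in> pos (snd (S i))" using ME[OF dp S, of "tp n (snd (S j))" i "j - i"] Vn(1)[OF vj] P_def by simp
  then obtain z0 where z0: "z0 \<in> zs (snd (S i))" "snd z0 = P" unfolding pos_def by blast
  have "hist0 n \<delta> S i j (top0 n (snd (S j))) = z0"
    unfolding hist0_def Vn(6)[OF vj] P_def[symmetric]
    using z0 Vn(8)[OF vi] by (intro the_equality) auto
  then have "upper0 n \<delta> S i j \<longleftrightarrow> z0 = top0 n (snd (S i))" unfolding upper0_def by simp
  also have "\<dots> \<longleftrightarrow> P = tp n (snd (S i))"
    using z0 Vn(5,6,8)[OF vi] by metis
  finally show ?thesis unfolding P_def .
qed

lemma descent:
  assumes dp: "dpda n Q G A \<delta>" and S: "srun n Q G A \<delta> star S"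
  shows "infinite J \<Longrightarrow> infinite K \<Longrightarrow>
    (\<forall>a\<in>J. \<forall>b\<in>J. a \<le> b \<longrightarrow> histd n \<delta> S a (b - a) (tp n (snd (S b))) = tp n (snd (S a))) \<Longrightarrow>
    (\<forall>a\<in>K. \<forall>b\<in>K. a \<le> b \<longrightarrow> histd n \<delta> S a (b - a) (tp n (snd (S b))) = tp n (snd (S a))) \<Longrightarrow>
    a \<in> J \<Longrightarrow> b \<in> K \<Longrightarrow> a \<le> b \<Longrightarrow>
    dif e (tp n (snd (S a))) (histd n \<delta> S a (b - a) (tp n (snd (S b)))) \<Longrightarrow> False"
proof (induct e arbitrary: J K a b rule: less_induct)
  case (less e)
  let ?\<tau> = "\<lambda>t. tp n (snd (S t))"
  have vs: "\<And>t. stack_of n G n (snd (S t)) \<and> nonempty (snd (S t))" using S valid_stack unfolding srun_def by blast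
  obtain c where c: "c \<in> J" "b \<le> c" using inf_ge[OF less.prems(1)] by blast
  have ac: "a \<le> c" using c less.prems(7) by simp
  have Dac: "histd n \<delta> S a (c - a) (?\<tau> c) = ?\<tau> a" using less.prems(3,5) c ac by blast
  define y where "y = histd n \<delta> S b (c - b) (?\<tau> c)"
  define xa where "xa = histd n \<delta> S a (b - a) (?\<tau> b)"
  have comp: "histd n \<delta> S a (c - a) (?\<tau> c) = histd n \<delta> S a (b - a) y"
    using histd_comp[of n \<delta> S a "b - a" "c - b" "?\<tau> c"] less.prems(7) c(2) y_def by simp
  then have ya: "histd n \<delta> S a (b - a) y = ?\<tau> a" using Dac by simp
  have xne: "xa \<noteq> ?\<tau> a" using less.prems(8) dif_neq xa_def by metis
  have yne: "y \<noteq> ?\<tau> b" using ya xne xa_def by auto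
  have "S (b + (c - b)) = S c" using c by simp
  moreover have tcpos: "?\<tau> c \<in> pos (snd (S c))" using Vn(1) vs by blast
  ultimately have ypos: "y \<in> pos (snd (S b))" using ME[OF dp S, of "?\<tau> c" b "c - b"] y_def by simp
  have tbpos: "?\<tau> b \<in> pos (snd (S b))" using Vn(1) vs by blast
  have "length (?\<tau> b) = length y" using Vn(2) vs ypos tbpos by metis
  then obtain e' where e': "dif e' (?\<tau> b) y" using dif_ex yne by metis
  have "S (a + (b - a)) = S b" using less.prems(7) by simp
  then have xapos: "xa \<in> pos (snd (S a))" using ME[OF dp S, of "?\<tau> b" a "b - a"] tbpos xa_def by simp
  have tapos: "?\<tau> a \<in> pos (snd (S a))" using Vn(1) vs by blast
  have la: "length xa = length (?\<tau> a)" using Vn(2) vs xapos tapos by metis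
  have de: "dif e xa (?\<tau> a)" using dif_sym[OF _ less.prems(8)] la xa_def by simp
  have cc: "concl e' e (?\<tau> b) y xa (?\<tau> a)"
    using MO[OF dp S, of "?\<tau> b" a "b - a" y e' e] \<open>S (a + (b - a)) = S b\<close> tbpos ypos e' de xa_def ya by simp
  have "xa ! e \<le> ?\<tau> a ! e" using Vn(3) vs xapos de unfolding dif_def
    by (metis Vn(2) la)
  moreover have "xa ! e \<noteq> ?\<tau> a ! e" using de unfolding dif_def by simp
  ultimately have xl: "xa ! e < ?\<tau> a ! e" by simp
  have "\<not> (e' = e \<and> (?\<tau> b ! e < y ! e \<longleftrightarrow> xa ! e < ?\<tau> a ! e))"
  proof
    assume h: "e' = e \<and> (?\<tau> b ! e < y ! e \<longleftrightarrow> xa ! e < ?\<tau> a ! e)"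
    then have "?\<tau> b ! e < y ! e" using xl by simp
    moreover have "y ! e \<le> ?\<tau> b ! e" using Vn(3) vs ypos e' h unfolding dif_def
      by (metis Vn(2) tbpos)
    ultimately show False by simp
  qed
  then have "e' < e" using cc unfolding concl_def by blast
  have Dbc: "dif e' (?\<tau> b) (histd n \<delta> S b (c - b) (?\<tau> c))" using e' y_def by simp
  show False using less.hyps[OF \<open>e' < e\<close> less.prems(2,1,4,3,6) c(1) c(2) Dbc] .
qed



lemma det: "star_step n A \<delta> star c c1 \<Longrightarrow> star_step n A \<delta> star c c2 \<Longrightarrow> c1 = c2"
  by (cases "\<delta> (fst c) (topsym n (snd c))") (auto simp: star_step_def step_def prod_eq_iff)

lemma upper0_cong: "(\<And>t. t \<le> j \<Longrightarrow> R t = S t) \<Longrightarrow> upper0 n \<delta> R 0 j = upper0 n \<delta> S 0 j"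
proof -
  assume a: "\<And>t. t \<le> j \<Longrightarrow> R t = S t"
  have h: "histd n \<delta> R 0 j p = histd n \<delta> S 0 j p" for p using histd_cong[of j R 0 S] a by simp
  show ?thesis unfolding upper0_def hist0_def using h a[of 0] a[of j] by simp
qed

lemma upper0_shift: "upper0 n \<delta> (\<lambda>t. S (m + t)) k k' = upper0 n \<delta> S (m + k) (m + k')"
  unfolding upper0_def hist0_def histd_shift by simp

theorem mainTheorem13:
  fixes n :: nat and Q :: "'q set" and G :: "'g set" and A :: "'a set"
    and \<delta> :: "'q \<Rightarrow> 'g \<Rightarrow> ('q, 'a, 'g) tr" and star :: 'a
    and R :: "nat \<Rightarrow> ('q, 'g) conf" and m :: nat
  assumes "dpda n Q G A \<delta>"
    and "star \<in> A"
    and "\<forall>i\<le>m. valid_conf n Q G (R i)"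
    and "\<forall>i<m. star_step n A \<delta> star (R i) (R (Suc i))"
    and "milestone n Q G A \<delta> star (R 0)"
    and "milestone n Q G A \<delta> star (R m)"
  shows "upper0 n \<delta> R 0 m"
proof -
  note dp = assms(1)
  obtain S I where S: "S 0 = R 0" "srun n Q G A \<delta> star S" "infinite I" "0 \<in> I"
    "\<forall>i\<in>I. \<forall>j\<in>I. i \<le> j \<longrightarrow> upper0 n \<delta> S i j"
    using assms(5) unfolding milestone_def srun_def by blast
  obtain S' I' where S': "S' 0 = R m" "srun n Q G A \<delta> star S'" "infinite I'" "0 \<in> I'"
    "\<forall>i\<in>I'. \<forall>j\<in>I'. i \<le> j \<longrightarrow> upper0 n \<delta> S' i j"
    using assms(6) unfolding milestone_def srun_def by blast
  have SR: "t \<le> m \<Longrightarrow> S t = R t" for t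
  proof (induct t)
    case 0 then show ?case using S(1) by simp
  next
    case (Suc t)
    then have "S t = R t" by simp
    moreover have "star_step n A \<delta> star (S t) (S (Suc t))" using S(2) unfolding srun_def by blast
    moreover have "star_step n A \<delta> star (R t) (R (Suc t))" using assms(4) Suc.prems by simp
    ultimately show ?case using det by metis
  qed
  have SS: "S' t = S (m + t)" for t
  proof (induct t)
    case 0 then show ?case using S'(1) SR[of m] by simp
  next
    case (Suc t)
    have "star_step n A \<delta> star (S' t) (S' (Suc t))" using S'(2) unfolding srun_def by blast
    moreover have "star_step n A \<delta> star (S (m + t)) (S (Suc (m + t)))" using S(2) unfolding srun_def by blast
    ultimately show ?case using det Suc by (metis add_Suc_right)
  qed
  then have S'eq: "S' = (\<lambda>t. S (m + t))" by auto
  let ?\<tau> = "\<lambda>t. tp n (snd (S t))"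
  define K where "K = (\<lambda>k. m + k) ` I'"
  have infK: "infinite K" unfolding K_def using S'(3) finite_imageD inj_on_def by (metis add_left_cancel)
  have mK: "\<forall>a\<in>K. \<forall>b\<in>K. a \<le> b \<longrightarrow> histd n \<delta> S a (b - a) (?\<tau> b) = ?\<tau> a"
  proof (intro ballI impI)
    fix a b assume "a \<in> K" "b \<in> K" "a \<le> b"
    then obtain k k' where kk: "k \<in> I'" "k' \<in> I'" "a = m + k" "b = m + k'" unfolding K_def by blast
    then have "k \<le> k'" using \<open>a \<le> b\<close> by simp
    then have "upper0 n \<delta> S a b" using S'(5) kk upper0_shift[of n \<delta> S m k k'] S'eq by simp
    then show "histd n \<delta> S a (b - a) (?\<tau> b) = ?\<tau> a" using upper_iff[OF dp S(2) \<open>a \<le> b\<close>] by simp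
  qed
  have mI: "\<forall>a\<in>I. \<forall>b\<in>I. a \<le> b \<longrightarrow> histd n \<delta> S a (b - a) (?\<tau> b) = ?\<tau> a"
    using S(5) upper_iff[OF dp S(2)] by blast
  have mK': "m \<in> K" unfolding K_def using S'(4) by force
  have "upper0 n \<delta> S 0 m"
  proof (rule ccontr)
    assume "\<not> upper0 n \<delta> S 0 m"
    then have ne: "histd n \<delta> S 0 m (?\<tau> m) \<noteq> ?\<tau> 0" using upper_iff[OF dp S(2), of 0 m] by simp
    have vs: "\<And>t. stack_of n G n (snd (S t)) \<and> nonempty (snd (S t))"
      using S(2) valid_stack unfolding srun_def by blast
    have "?\<tau> m \<in> pos (snd (S m))" using Vn(1) vs by blast
    then have tm: "?\<tau> m \<in> pos (snd (S (0 + m)))" by simp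
    have p1: "histd n \<delta> S 0 m (?\<tau> m) \<in> pos (snd (S 0))" using ME[OF dp S(2) tm] .
    have p0: "?\<tau> 0 \<in> pos (snd (S 0))" using Vn(1) vs by blast
    have "length (?\<tau> 0) = length (histd n \<delta> S 0 m (?\<tau> m))" using Vn(2) vs p0 p1 by metis
    then obtain e where "dif e (?\<tau> 0) (histd n \<delta> S 0 m (?\<tau> m))" using dif_ex ne by metis
    then show False using descent[OF dp S(2) S(3) infK mI mK S(4) mK'] by simp
  qed
  then show ?thesis using upper0_cong[of m R S] SR by metis
qed


end
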